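(* Let $\mathcal{A}$ be an Ershov $\mathcal{C}$-algebra. Then $\mathcal{A}$ is weakly equationally Noetherian if and only if both of the following hold: \begin{enumerate} \item every subset of $\mathcal{C}$ that is bounded above in $\mathcal{A}$ has a supremum in $\mathcal{A}$, and this supremum belongs to $\mathcal{C}$; \item for every set $\{c_j \mid j\in J\} \subseteq \mathcal{C}$ that is not bounded above there exists $c \in \mathcal{C}$ such that the system $\{x \wedge c_j = 0 \mid j \in J\}$ in one variable $x$ is equivalent over $\mathcal{A}$ to the equation $x \leq c$. \end{enumerate}
   Context: An Ershov algebra is a structure $\langle A; \vee, \wedge, \setminus, 0\rangle$ such that $\langle A;\vee,\wedge\rangle$ is a distributive lattice with least element $0$, and $b \setminus a$ is the relative complement: the unique $z$ with $z \wedge a = 0$ and $z \vee a = a \vee b$. An Ershov $\mathcal{C}$-algebra is an Ershov algebra $\mathcal{A}$ together with a distinguished subalgebra $\mathcal{C}$ whose elements are added as constant symbols; $\mathcal{L}$ is the language $\{\vee,\wedge,\setminus,0\}$ plus these constants. An equation is $t(\bar x)=s(\bar x)$ with $t,s$ terms of $\mathcal{L}$; $t\le s$ means the equation $t\vee s=s$. Two systems of equations are equivalent over $\mathcal{A}$ if they have the same solution set. $\mathcal{A}$ is weakly equationally Noetherian if every system of equations (possibly infinite) in finitely many variables is equivalent over $\mathcal{A}$ to some finite system of equations of $\mathcal{L}$. "Not bounded above" means having no upper bound in $\mathcal{A}$. *)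

theory Defs
  imports Main
begin

text \<open>An Ershov algebra is modelled as a type carrying a distributive lattice
  with least element bot (0) and an operation minus (relative complement
  b - a), satisfying the defining property of the relative complement.\<close>

definition ershov_algebra :: "'a::{distrib_lattice,order_bot,minus} itself \<Rightarrow> bool" where
  "ershov_algebra _ \<longleftrightarrow>
     (\<forall>a b::'a. inf (b - a) a = bot \<and> sup (b - a) a = sup a b)"

definition ershov_subalgebra :: "'a::{distrib_lattice,order_bot,minus} set \<Rightarrow> bool" where
  "ershov_subalgebra C \<longleftrightarrow> bot \<in> C \<and>
     (\<forall>a\<in>C. \<forall>b\<in>C. sup a b \<in> C \<and> inf a b \<in> C \<and> a - b \<in> C)"

datatype 'a trm = Var nat | Cst 'a | Join "'a trm" "'a trm" | Meet "'a trm" "'a trm"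
  | Diff "'a trm" "'a trm" | Zero

fun eval :: "(nat \<Rightarrow> 'a::{distrib_lattice,order_bot,minus}) \<Rightarrow> 'a trm \<Rightarrow> 'a" where
  "eval v (Var i) = v i"
| "eval v (Cst c) = c"
| "eval v (Join t s) = sup (eval v t) (eval v s)"
| "eval v (Meet t s) = inf (eval v t) (eval v s)"
| "eval v (Diff t s) = eval v t - eval v s"
| "eval v Zero = bot"

fun vars :: "'a trm \<Rightarrow> nat set" where
  "vars (Var i) = {i}"
| "vars (Cst c) = {}"
| "vars (Join t s) = vars t \<union> vars s"
| "vars (Meet t s) = vars t \<union> vars s"
| "vars (Diff t s) = vars t \<union> vars s"
| "vars Zero = {}"

fun csts :: "'a trm \<Rightarrow> 'a set" where
  "csts (Var i) = {}"
| "csts (Cst c) = {c}"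
| "csts (Join t s) = csts t \<union> csts s"
| "csts (Meet t s) = csts t \<union> csts s"
| "csts (Diff t s) = csts t \<union> csts s"
| "csts Zero = {}"

type_synonym 'a eqn = "'a trm \<times> 'a trm"

definition eqn_over :: "'a set \<Rightarrow> nat \<Rightarrow> 'a eqn \<Rightarrow> bool" where
  "eqn_over C n e \<longleftrightarrow> csts (fst e) \<union> csts (snd e) \<subseteq> C \<and>
     vars (fst e) \<union> vars (snd e) \<subseteq> {..<n}"

definition sol :: "'a::{distrib_lattice,order_bot,minus} eqn set \<Rightarrow> (nat \<Rightarrow> 'a) set" where
  "sol S = {v. \<forall>e\<in>S. eval v (fst e) = eval v (snd e)}"

definition leq_eqn :: "'a trm \<Rightarrow> 'a trm \<Rightarrow> 'a eqn" where
  "leq_eqn t s = (Join t s, s)"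

definition weakly_eq_noetherian :: "'a::{distrib_lattice,order_bot,minus} set \<Rightarrow> bool" where
  "weakly_eq_noetherian C \<longleftrightarrow>
     (\<forall>n. \<forall>S. (\<forall>e\<in>S. eqn_over C n e) \<longrightarrow>
        (\<exists>F. finite F \<and> (\<forall>e\<in>F. eqn_over C n e) \<and> sol F = sol S))"

definition bounded_above :: "'a::order set \<Rightarrow> bool" where
  "bounded_above X \<longleftrightarrow> (\<exists>u. \<forall>x\<in>X. x \<le> u)"

definition is_supremum :: "'a::order \<Rightarrow> 'a set \<Rightarrow> bool" where
  "is_supremum s X \<longleftrightarrow> (\<forall>x\<in>X. x \<le> s) \<and> (\<forall>u. (\<forall>x\<in>X. x \<le> u) \<longrightarrow> s \<le> u)"

end

theory Submission
  imports Defs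
begin

lemma uniq: fixes z :: "'a::distrib_lattice"
  assumes "inf z a = inf z' a" "sup z a = sup z' a" shows "z = z'"
proof -
  have "z = inf z (sup z a)" by simp
  also have "\<dots> = inf z (sup z' a)" using assms by simp
  also have "\<dots> = sup (inf z z') (inf z a)" by (simp add: inf_sup_distrib1)
  also have "\<dots> = sup (inf z z') (inf z' a)" using assms by simp
  also have "\<dots> = inf z' (sup z a)" by (simp add: inf_sup_distrib1 inf_commute)
  also have "\<dots> = inf z' (sup z' a)" using assms by simp
  also have "\<dots> = z'" by simp
  finally show ?thesis .
qed

fun piece :: "(nat \<Rightarrow> 'a::{distrib_lattice,order_bot,minus}) \<Rightarrow> 'a \<Rightarrow> nat \<Rightarrow> nat set \<Rightarrow> 'a" where
  "piece v x 0 S = x"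
| "piece v x (Suc n) S = (if n \<in> S then inf (piece v x n S) (v n) else piece v x n S - v n)"

fun pieceT :: "'a trm \<Rightarrow> nat \<Rightarrow> nat set \<Rightarrow> 'a trm" where
  "pieceT t 0 S = t"
| "pieceT t (Suc n) S = (if n \<in> S then Meet (pieceT t n S) (Var n) else Diff (pieceT t n S) (Var n))"

fun JT :: "nat \<Rightarrow> 'a trm" where
  "JT 0 = Zero"
| "JT (Suc n) = Join (JT n) (Var n)"

definition polval :: "bool \<Rightarrow> 'a::{distrib_lattice,order_bot,minus} \<Rightarrow> 'a \<Rightarrow> 'a" where
  "polval p c R = (if p then inf R c else R - c)"

fun joinP :: "bool \<times> 'a::{distrib_lattice,order_bot,minus} \<Rightarrow> bool \<times> 'a \<Rightarrow> bool \<times> 'a" where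
  "joinP (p,a) (q,b) = (if p then (if q then (True, sup a b) else (False, b - a))
     else (if q then (False, a - b) else (False, inf a b)))"
fun meetP :: "bool \<times> 'a::{distrib_lattice,order_bot,minus} \<Rightarrow> bool \<times> 'a \<Rightarrow> bool \<times> 'a" where
  "meetP (p,a) (q,b) = (if p then (if q then (True, inf a b) else (True, a - b))
     else (if q then (True, b - a) else (False, sup a b)))"
fun diffP :: "bool \<times> 'a::{distrib_lattice,order_bot,minus} \<Rightarrow> bool \<times> 'a \<Rightarrow> bool \<times> 'a" where
  "diffP (p,a) (q,b) = (if p then (if q then (True, a - b) else (True, inf a b))
     else (if q then (False, sup a b) else (True, b - a)))"

fun pol :: "nat set \<Rightarrow> 'a::{distrib_lattice,order_bot,minus} trm \<Rightarrow> bool \<times> 'a" where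
  "pol S (Var i) = (if i \<in> S then (False, bot) else (True, bot))"
| "pol S (Cst c) = (True, c)"
| "pol S Zero = (True, bot)"
| "pol S (Join t s) = joinP (pol S t) (pol S s)"
| "pol S (Meet t s) = meetP (pol S t) (pol S s)"
| "pol S (Diff t s) = diffP (pol S t) (pol S s)"

definition wS :: "nat set \<Rightarrow> 'a::{distrib_lattice,order_bot,minus} \<Rightarrow> nat \<Rightarrow> 'a" where
  "wS S R = (\<lambda>i. if i \<in> S then R else bot)"

definition NE :: "nat \<Rightarrow> nat set set" where "NE n = {S. S \<subseteq> {..<n} \<and> S \<noteq> {}}"
definition RT :: "nat \<Rightarrow> nat set \<Rightarrow> 'a trm" where "RT n S = pieceT (Var (Min S)) n S"
definition eq1 :: "'a trm \<Rightarrow> 'a \<Rightarrow> 'a eqn" where "eq1 T a = (Meet T (Cst a), Zero)"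
definition eq2 :: "'a trm \<Rightarrow> 'a \<Rightarrow> 'a eqn" where "eq2 T a = (Diff T (Cst a), Zero)"
definition eq3 :: "'a trm \<Rightarrow> 'a \<Rightarrow> 'a eqn" where "eq3 T a = (Diff (Cst a) T, Zero)"
definition uT :: "'a eqn \<Rightarrow> 'a trm" where
  "uT e = Join (Diff (fst e) (snd e)) (Diff (snd e) (fst e))"
definition regE :: "nat \<Rightarrow> 'a::{distrib_lattice,order_bot,minus} eqn \<Rightarrow> nat set \<Rightarrow> 'a eqn" where
  "regE n e S = (if fst (pol S (uT e)) then eq1 (RT n S) (snd (pol S (uT e)))
                 else eq2 (RT n S) (snd (pol S (uT e))))"
definition EE :: "nat \<Rightarrow> 'a::{distrib_lattice,order_bot,minus} eqn \<Rightarrow> 'a eqn set" where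
  "EE n e = insert (eq3 (JT n) (eval (\<lambda>_. bot) (uT e))) (regE n e ` NE n)"

lemma eval_pieceT: "eval v (pieceT t n S) = piece v (eval v t) n S"
  by (induction n) auto
lemma vars_pieceT: "vars (pieceT t n S) \<subseteq> vars t \<union> {..<n}"
  by (induction n) auto
lemma csts_pieceT: "csts (pieceT t n S) = csts t"
  by (induction n) auto
lemma vars_JT: "vars (JT n) \<subseteq> {..<n}" by (induction n) auto
lemma csts_JT: "csts (JT n) = {}" by (induction n) auto
lemma eval_cong: "(\<And>i. i \<in> vars t \<Longrightarrow> v i = v' i) \<Longrightarrow> eval v t = eval v' t"
  by (induction t) auto
lemma eval_C: "ershov_subalgebra C \<Longrightarrow> csts t \<subseteq> C \<Longrightarrow> (\<And>i. v i \<in> C) \<Longrightarrow> eval v t \<in> C"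
  by (induction t) (auto simp: ershov_subalgebra_def)
lemma pol_C: "ershov_subalgebra C \<Longrightarrow> csts t \<subseteq> C \<Longrightarrow> snd (pol S t) \<in> C"
proof (induction t)
  case (Join t s) then show ?case
    by (cases "pol S t"; cases "pol S s") (auto simp: ershov_subalgebra_def)
next
  case (Meet t s) then show ?case
    by (cases "pol S t"; cases "pol S s") (auto simp: ershov_subalgebra_def)
next
  case (Diff t s) then show ?case
    by (cases "pol S t"; cases "pol S s") (auto simp: ershov_subalgebra_def)
qed (auto simp: ershov_subalgebra_def)
lemma sol_Un: "sol (A \<union> B) = sol A \<inter> sol B" by (auto simp: sol_def)
lemma sol_UN: "sol (\<Union>i\<in>I. A i) = (\<Inter>i\<in>I. sol (A i))" by (auto simp: sol_def)
lemma sol_insert: "sol (insert e A) = sol {e} \<inter> sol A" by (auto simp: sol_def)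
lemma sol_union_single: "sol A = (\<Inter>e\<in>A. sol {e})" by (auto simp: sol_def)
lemma finite_NE: "finite (NE n)"
  by (rule finite_subset[of _ "Pow {..<n}"]) (auto simp: NE_def)

lemma inf_bot_l[simp]: "inf bot (x::'a::{distrib_lattice,order_bot}) = bot"
  by (simp add: inf_absorb1)
lemma inf_bot_r[simp]: "inf (x::'a::{distrib_lattice,order_bot}) bot = bot"
  by (simp add: inf_absorb2)
lemma sup_bot_l[simp]: "sup bot (x::'a::{distrib_lattice,order_bot}) = x"
  by (simp add: sup_absorb2)
lemma sup_bot_r[simp]: "sup (x::'a::{distrib_lattice,order_bot}) bot = x"
  by (simp add: sup_absorb1)
lemma sup_eq_bot_iff2: "sup x y = bot \<longleftrightarrow> (x::'a::{distrib_lattice,order_bot}) = bot \<and> y = bot"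
  by (metis bot_unique sup_ge1 sup_ge2 sup_bot_l)


definition shape :: "'a::{distrib_lattice,order_bot,minus} set \<Rightarrow> (nat \<Rightarrow> 'a) set \<Rightarrow> bool" where
  "shape C Sol \<longleftrightarrow> (\<exists>d\<in>C. \<exists>p\<in>C. \<exists>q\<in>C. \<exists>b.
      Sol = {v. d \<le> v 0 \<and> inf (v 0) p = bot \<and> (b \<longrightarrow> v 0 \<le> q)})"

lemma shape_UNIV: "ershov_subalgebra C \<Longrightarrow> shape C UNIV"
  unfolding shape_def ershov_subalgebra_def
  by (intro bexI[of _ bot] exI[of _ False]) auto

lemma shape_int:
  assumes SA: "ershov_subalgebra C" and A: "shape C A" and B: "shape C B"
  shows "shape C (A \<inter> B)"
proof -
  obtain d1 p1 q1 b1 where 1: "d1 \<in> C" "p1 \<in> C" "q1 \<in> C"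
    "A = {v. d1 \<le> v 0 \<and> inf (v 0) p1 = bot \<and> (b1 \<longrightarrow> v 0 \<le> q1)}"
    using A unfolding shape_def by blast
  obtain d2 p2 q2 b2 where 2: "d2 \<in> C" "p2 \<in> C" "q2 \<in> C"
    "B = {v. d2 \<le> v 0 \<and> inf (v 0) p2 = bot \<and> (b2 \<longrightarrow> v 0 \<le> q2)}"
    using B unfolding shape_def by blast
  define q where "q = (if b1 then (if b2 then inf q1 q2 else q1) else q2)"
  have qC: "q \<in> C" using 1 2 SA unfolding q_def ershov_subalgebra_def by auto
  have dC: "sup d1 d2 \<in> C" "sup p1 p2 \<in> C" using 1 2 SA unfolding ershov_subalgebra_def by auto
  have "A \<inter> B = {v. sup d1 d2 \<le> v 0 \<and> inf (v 0) (sup p1 p2) = bot \<and> (b1 \<or> b2 \<longrightarrow> v 0 \<le> q)}"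
    unfolding 1(4) 2(4) q_def by (auto simp: inf_sup_distrib1 sup_eq_bot_iff2)
  then show ?thesis unfolding shape_def using qC dC by blast
qed

context assumes E: "ershov_algebra TYPE('a::{distrib_lattice,order_bot,minus})"
begin
lemma d1: "inf (b - a) a = (bot::'a)" using E unfolding ershov_algebra_def by blast
lemma d2: "sup (b - a) a = sup a (b::'a)" using E unfolding ershov_algebra_def by blast
lemma dchar: "(z::'a) = b - a \<longleftrightarrow> inf z a = bot \<and> sup z a = sup a b"
  by (metis d1 d2 uniq)
lemma t1: "(x::'a) - y = bot \<longleftrightarrow> x \<le> y" by (metis d1 d2 inf.cobounded2 inf_sup_absorb sup.absorb2 sup_commute)
lemma t2: "(x::'a) - y \<le> x" by (metis (no_types, lifting) d1 d2 inf.cobounded2 sup.absorb_iff2 sup_commute sup_inf_distrib2)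
lemma t3: "sup x y - (v::'a) = sup (x - v) (y - v)" by (metis (no_types, lifting) dchar inf_sup_aci(6) inf_sup_distrib2 sup.idem)
lemma t4: "inf (x - y) (v::'a) = inf x v - inf y v" by (metis (no_types, lifting) ext dchar inf.absorb_iff2 inf.cobounded2 inf_commute inf_sup_aci(3) inf_sup_distrib1)
lemma t5: "(x - y) - (v::'a) = (x - v) - (y - v)" by (smt (verit) d1 d2 dchar inf_commute inf_sup_absorb inf_sup_aci(3,6) inf_sup_distrib1 inf_sup_distrib2 sup.idem sup_commute sup_inf_distrib1)
lemma t6: "inf x y - (v::'a) = inf x (y - v)" by (metis (no_types, lifting) dchar inf.idem inf_assoc inf_commute sup_commute sup_inf_distrib1)
lemma t7: "(x - a) - (b::'a) = x - sup a b" by (smt (verit, best) d1 d2 inf_assoc inf_sup_absorb inf_sup_aci(6) sup.idem sup_commute sup_inf_distrib2 uniq)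
lemma t8: "x \<le> y \<Longrightarrow> x - v \<le> y - (v::'a)"
proof -
  assume "x \<le> y"
  then have "x - v = inf x y - v" by (simp add: inf_absorb1)
  also have "\<dots> = inf x (y - v)" by (rule t6)
  finally show ?thesis by simp
qed
lemma t9: "(x::'a) = sup (inf x y) (x - y)" by (metis (no_types, lifting) d1 d2 sup_commute sup_inf_absorb sup_inf_distrib1)
lemma t10: "inf a x = bot \<Longrightarrow> a - x = (a::'a)" by (metis dchar sup_commute)
lemma t11: "x \<le> a \<Longrightarrow> inf x s = bot \<Longrightarrow> x \<le> a - (s::'a)" by (smt (verit, ccfv_SIG) d1 d2 inf_commute inf_sup_absorb inf_sup_distrib2 le_iff_sup)
lemma t12: "inf y (x - y) = (bot::'a)" by (metis d1 inf_commute)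
lemma m1: "inf (inf R a) (inf R b) = inf R (inf a (b::'a))" by (simp add: inf_assoc inf_sup_aci(3))
lemma m2: "inf (inf R a) (R - b) = inf R (a - (b::'a))" by (smt (verit) d1 d2 inf_commute inf_sup_absorb inf_sup_aci(3) inf_sup_distrib1 sup_commute)
lemma m3: "inf (R - a) (inf R b) = inf R (b - (a::'a))" by (smt (verit) d1 d2 inf_commute inf_sup_absorb inf_sup_aci(3) inf_sup_distrib1)
lemma m4: "inf (R - a) (R - b) = R - sup a (b::'a)"
proof -
  have "inf (R - a) (R - b) = inf (R - a) R - b" by (rule t6[symmetric])
  also have "inf (R - a) R = R - a" using t2 by (simp add: inf_absorb1)
  finally show ?thesis by (simp add: t7)
qed
lemma f1: "inf R a - inf R b = inf R (a - (b::'a))"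
  using t4[of a b R] by (simp add: inf_commute)
lemma t13: "(x::'a) - y = x - inf x y"
proof -
  have a: "inf (x - y) (inf x y) = bot" by (metis d1 inf_assoc inf_commute inf_bot_l)
  have b: "sup (x - y) (inf x y) = sup (inf x y) x" using t9[of x y] by (simp add: sup_commute)
  show ?thesis using dchar a b by blast
qed
lemma f3: "(R - a) - inf R b = R - sup a (b::'a)"
proof -
  have "(R - a) - inf R b = R - sup a (inf R b)" by (rule t7)
  also have "\<dots> = R - inf R (sup a (inf R b))" by (rule t13)
  also have "inf R (sup a (inf R b)) = inf R (sup a b)" by (simp add: inf_sup_distrib1)
  also have "R - inf R (sup a b) = R - sup a b" by (rule t13[symmetric])
  finally show ?thesis .
qed

lemma t14: "(a::'a) - (a - b) = inf a b" by (metis (no_types, opaque_lifting) dchar inf_assoc sup_left_idem t9)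
lemma j1: "sup (inf R a) (R - b) = R - (b - (a::'a))" by (smt (verit, best) d2 f3 sup_commute t12 t3 t6 t7 t9)
lemma j2: "sup (R - a) (R - b) = R - inf a (b::'a)" by (smt (verit, ccfv_threshold) f1 inf_sup_absorb sup_commute sup_inf_absorb sup_inf_distrib1 t4 t6 t9)
lemma f2: "inf R a - (R - b) = inf R (inf a (b::'a))"
proof -
  have "inf R a - (R - b) = inf R a - inf (inf R a) (R - b)" by (rule t13)
  also have "\<dots> = inf R a - inf R (a - b)" by (simp add: m2)
  also have "\<dots> = inf R (a - (a - b))" by (rule f1)
  also have "\<dots> = inf R (inf a b)" by (simp add: t14)
  finally show ?thesis .
qed
lemma f4: "(R - a) - (R - b) = inf R (b - (a::'a))" by (smt (verit) d1 d2 f1 inf.idem inf_commute sup_commute sup_inf_absorb t6)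

lemma bot_diff: "(bot::'a) - x = bot" using t1 by simp
lemma diff_bot: "(x::'a) - bot = x" by (rule t10) (simp add: inf_bot_r)

lemma p_sup: "piece v (sup x y) n S = sup (piece v x n S) (piece v (y::'a) n S)"
  by (induction n) (auto simp: inf_sup_distrib2 t3)
lemma p_inf: "piece v (inf x y) n S = inf x (piece v (y::'a) n S)"
  by (induction n) (auto simp: inf_assoc t6)
lemma p_diff: "piece v (x - y) n S = piece v x n S - piece v (y::'a) n S"
proof (induction n)
  case (Suc n)
  show ?case
  proof (cases "n \<in> S")
    case True then show ?thesis using Suc by (simp add: t4)
  next
    case False
    then have "piece v (x - y) (Suc n) S = (piece v x n S - piece v y n S) - v n" using Suc by simp
    also have "\<dots> = (piece v x n S - v n) - (piece v y n S - v n)" by (rule t5)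
    finally show ?thesis using False by simp
  qed
qed simp
lemma p_bot: "piece v (bot::'a) n S = bot"
  by (induction n) (auto simp: bot_diff)
lemma p_le: "piece v (x::'a) n S \<le> x"
  by (induction n) (auto intro: le_infI1 order_trans[OF t2])
lemma p_mono: "(x::'a) \<le> y \<Longrightarrow> piece v x n S \<le> piece v y n S"
proof -
  assume "x \<le> y"
  then have "piece v x n S = piece v (inf x y) n S" by (simp add: inf_absorb1)
  also have "\<dots> = inf x (piece v y n S)" by (rule p_inf)
  finally show ?thesis by simp
qed
lemma p_inf2: "piece v (inf x y) n S = inf (piece v x n S) (piece v (y::'a) n S)"
proof (rule antisym)
  show "piece v (inf x y) n S \<le> inf (piece v x n S) (piece v y n S)"
    by (simp add: p_mono)
  have "inf (piece v x n S) (piece v y n S) \<le> inf x (piece v y n S)"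
    using p_le by (meson inf_mono order_refl)
  then show "inf (piece v x n S) (piece v y n S) \<le> piece v (inf x y) n S" by (simp add: p_inf)
qed
lemma p_le_v: "i \<in> S \<Longrightarrow> i < n \<Longrightarrow> piece v (x::'a) n S \<le> v i"
proof (induction n)
  case 0 then show ?case by simp
next
  case (Suc n)
  show ?case
  proof (cases "i = n")
    case True then show ?thesis using Suc by simp
  next
    case False then have "i < n" using Suc by simp
    then have "piece v x n S \<le> v i" using Suc by simp
    then show ?thesis by (auto intro: le_infI1 order_trans[OF t2])
  qed
qed
lemma p_vzero: "i \<notin> S \<Longrightarrow> i < n \<Longrightarrow> piece v ((v::nat \<Rightarrow> 'a) i) n S = bot"
proof (induction n)
  case 0 then show ?case by simp
next
  case (Suc n)
  show ?case
  proof (cases "i = n")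
    case True
    have "piece v (v i) n S \<le> v i" by (rule p_le)
    then show ?thesis using True Suc by (simp add: t1)
  next
    case False then have "i < n" using Suc by simp
    then have "piece v (v i) n S = bot" using Suc by simp
    then show ?thesis by (simp add: bot_diff)
  qed
qed
lemma p_ins: "n \<le> m \<Longrightarrow> piece v (x::'a) n (insert m S) = piece v x n S"
  by (induction n) auto
lemma p_sep: "(\<And>S. S \<subseteq> {..<n} \<Longrightarrow> piece v (x::'a) n S = bot) \<Longrightarrow> x = bot"
proof (induction n)
  case 0 then show ?case by (metis empty_subsetI piece.simps(1))
next
  case (Suc n)
  show ?case
  proof (rule Suc.IH)
    fix S assume S: "S \<subseteq> {..<n}"
    then have "n \<notin> S" by auto
    have S1: "S \<subseteq> {..<Suc n}" using S by auto
    have a1: "piece v x n S - v n = bot" using Suc.prems[OF S1] \<open>n \<notin> S\<close> by simp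
    have S2: "insert n S \<subseteq> {..<Suc n}" using S by auto
    have "piece v x (Suc n) (insert n S) = bot" using Suc.prems[OF S2] .
    then have a2: "inf (piece v x n S) (v n) = bot" by (simp add: p_ins)
    show "piece v x n S = bot" using t9[of "piece v x n S" "v n"] a1 a2 by simp
  qed
qed
lemma p_empty: "piece v (x::'a) n {} = x - eval v (JT n)"
  by (induction n) (auto simp: t7 diff_bot)
lemma p_same: "i \<in> S \<Longrightarrow> j \<in> S \<Longrightarrow> i < n \<Longrightarrow> j < n \<Longrightarrow>
   piece v ((v::nat\<Rightarrow>'a) i) n S = piece v (v j) n S"
proof -
  assume a: "i \<in> S" "j \<in> S" "i < n" "j < n"
  have "piece v (v j) n S = inf (v i) (piece v (v j) n S)"
    using p_le_v[OF a(1) a(3)] by (simp add: inf.absorb2)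
  also have "\<dots> = piece v (inf (v i) (v j)) n S" by (simp add: p_inf)
  also have "\<dots> = piece v (inf (v j) (v i)) n S" by (simp add: inf_commute)
  also have "\<dots> = inf (v j) (piece v (v i) n S)" by (simp add: p_inf)
  also have "\<dots> = piece v (v i) n S"
    using p_le_v[OF a(2) a(4)] by (simp add: inf.absorb2)
  finally show ?thesis by simp
qed
lemma p_cst: "i \<in> S \<Longrightarrow> i < n \<Longrightarrow> piece v (c::'a) n S = inf c (piece v (v i) n S)"
proof -
  assume a: "i \<in> S" "i < n"
  have "piece v c n S = inf (v i) (piece v c n S)"
    using p_le_v[OF a] by (simp add: inf.absorb2)
  also have "\<dots> = piece v (inf (v i) c) n S" by (simp add: p_inf)
  also have "\<dots> = piece v (inf c (v i)) n S" by (simp add: inf_commute)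
  also have "\<dots> = inf c (piece v (v i) n S)" by (simp add: p_inf)
  finally show ?thesis .
qed

lemma p_eval:
  assumes S: "S \<subseteq> {..<n}" "S \<noteq> {}"
  shows "vars t \<subseteq> {..<n} \<Longrightarrow>
  piece v (eval v t) n S = inf (piece v (v (Min S)) n S) (eval (wS S (piece v ((v::nat\<Rightarrow>'a) (Min S)) n S)) t)"
proof (induction t)
  have fin: "finite S" using finite_subset[OF S(1)] by simp
  have m1': "Min S \<in> S" using Min_in[OF fin S(2)] .
  have m: "Min S \<in> S" "Min S < n" using m1' S(1) by auto
  {
  case (Var i)
  show ?case
  proof (cases "i \<in> S")
    case True
    have "i < n" using True S by auto
    then show ?thesis using True m p_same[of i S "Min S" n v] by (simp add: wS_def)
  next
    case False
    have "i < n" using Var by simp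
    then show ?thesis using False p_vzero[of i S n v] by (simp add: wS_def)
  qed
  next
  case (Cst c)
  show ?case using p_cst[OF m, of v c] by (simp add: inf_commute)
  }
next
  case (Join t s)
  then have "piece v (eval v t) n S = inf (piece v (v (Min S)) n S) (eval (wS S (piece v (v (Min S)) n S)) t)"
    "piece v (eval v s) n S = inf (piece v (v (Min S)) n S) (eval (wS S (piece v (v (Min S)) n S)) s)" by auto
  then show ?case by (simp only: eval.simps p_sup inf_sup_distrib1[symmetric])
next
  case (Meet t s)
  then have "piece v (eval v t) n S = inf (piece v (v (Min S)) n S) (eval (wS S (piece v (v (Min S)) n S)) t)"
    "piece v (eval v s) n S = inf (piece v (v (Min S)) n S) (eval (wS S (piece v (v (Min S)) n S)) s)" by auto
  then show ?case by (simp only: eval.simps p_inf2 m1)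
next
  case (Diff t s)
  then have "piece v (eval v t) n S = inf (piece v (v (Min S)) n S) (eval (wS S (piece v (v (Min S)) n S)) t)"
    "piece v (eval v s) n S = inf (piece v (v (Min S)) n S) (eval (wS S (piece v (v (Min S)) n S)) s)" by auto
  then show ?case by (simp only: eval.simps p_diff f1)
next
  case Zero then show ?case by (simp add: p_bot)
qed

lemma p_eval0: "vars t \<subseteq> {..<n} \<Longrightarrow>
  piece (v::nat\<Rightarrow>'a) (eval v t) n {} = piece v (eval (\<lambda>_. bot) t) n {}"
proof (induction t)
  case (Var i)
  then have "i < n" by simp
  then show ?case using p_vzero[of i "{}" n v] by (simp add: p_bot)
qed (auto simp: p_sup p_inf2 p_diff p_bot)

lemma pol_ok: "inf R (eval (wS S R) t) = polval (fst (pol S t)) (snd (pol S (t::'a trm))) R"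
proof (induction t)
  case (Var i) then show ?case by (auto simp: wS_def polval_def diff_bot)
next
  case (Cst c) then show ?case by (auto simp: polval_def)
next
  case Zero then show ?case by (auto simp: polval_def)
next
  case (Join t s)
  obtain p a q b where pq: "pol S t = (p,a)" "pol S s = (q,b)" by (cases "pol S t"; cases "pol S s") auto
  have h: "inf R (eval (wS S R) (Join t s)) = sup (inf R (eval (wS S R) t)) (inf R (eval (wS S R) s))"
    by (simp add: inf_sup_distrib1)
  show ?case unfolding h Join.IH using pq
    by (cases p; cases q) (simp_all add: polval_def j1 j2 sup_commute[of "R - a" "inf R b"] inf_sup_distrib1)
next
  case (Meet t s)
  obtain p a q b where pq: "pol S t = (p,a)" "pol S s = (q,b)" by (cases "pol S t"; cases "pol S s") auto
  have h: "inf R (eval (wS S R) (Meet t s)) = inf (inf R (eval (wS S R) t)) (inf R (eval (wS S R) s))"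
    by (simp add: m1)
  show ?case unfolding h Meet.IH using pq
    by (cases p; cases q) (simp_all only: polval_def m1 m2 m3 m4 meetP.simps pol.simps if_True if_False fst_conv snd_conv)
next
  case (Diff t s)
  obtain p a q b where pq: "pol S t = (p,a)" "pol S s = (q,b)" by (cases "pol S t"; cases "pol S s") auto
  have h: "inf R (eval (wS S R) (Diff t s)) = inf R (eval (wS S R) t) - inf R (eval (wS S R) s)"
    by (simp add: f1)
  show ?case unfolding h Diff.IH using pq
    by (cases p; cases q) (simp_all only: polval_def f1 f2 f3 f4 diffP.simps pol.simps if_True if_False fst_conv snd_conv)
qed

lemma L_sup: "is_supremum s Y \<Longrightarrow> (\<forall>a\<in>Y. inf x a = bot) \<Longrightarrow> inf x (s::'a) = bot"
proof -
  assume s: "is_supremum s Y" and h: "\<forall>a\<in>Y. inf x a = bot"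
  have "\<forall>a\<in>Y. a \<le> s - x"
  proof
    fix a assume a: "a \<in> Y"
    have "a = sup (inf a x) (a - x)" by (rule t9)
    also have "\<dots> = a - x" using h a by (simp add: inf_commute)
    also have "\<dots> \<le> s - x" using s a by (intro t8) (auto simp: is_supremum_def)
    finally show "a \<le> s - x" .
  qed
  then have "s \<le> s - x" using s by (auto simp: is_supremum_def)
  then have "inf x s \<le> inf x (s - x)" by (meson inf_mono order_refl)
  then show ?thesis using t12[of x s] by (simp add: bot_unique)
qed

lemma sol_eq1: "sol (eq1 T ` Y) = {v. \<forall>a\<in>Y. inf (eval v T) a = (bot::'a)}"
  by (auto simp: sol_def eq1_def)
lemma sol_eq2: "sol (eq2 T ` Y) = {v. \<forall>a\<in>Y. eval v T \<le> (a::'a)}"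
  by (auto simp: sol_def eq2_def t1)
lemma sol_eq3: "sol (eq3 T ` Y) = {v. \<forall>a\<in>Y. (a::'a) \<le> eval v T}"
  by (auto simp: sol_def eq3_def t1)

lemma eqn_over_eqs:
  assumes "a \<in> C" "csts T \<subseteq> C" "vars T \<subseteq> {..<n}"
  shows "eqn_over C n (eq1 T a)" "eqn_over C n (eq2 T a)" "eqn_over C n (eq3 T a)"
  using assms by (auto simp: eqn_over_def eq1_def eq2_def eq3_def)

context
  fixes C :: "'a set"
  assumes SA: "ershov_subalgebra C"
    and c1: "\<forall>X. X \<subseteq> C \<and> bounded_above X \<longrightarrow> (\<exists>s\<in>C. is_supremum s X)"
    and c2: "\<forall>X. X \<subseteq> C \<and> \<not> bounded_above X \<longrightarrow>
         (\<exists>c\<in>C. sol ((\<lambda>cj. (Meet (Var 0) (Cst cj), Zero)) ` X)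
                 = sol {leq_eqn (Var 0) (Cst c)})"
begin

lemma G1:
  assumes T: "csts T \<subseteq> C" "vars T \<subseteq> {..<n}" and Y: "Y \<subseteq> C"
  shows "\<exists>F. finite F \<and> (\<forall>e\<in>F. eqn_over C n e) \<and> sol F = sol (eq1 T ` Y)"
proof (cases "bounded_above Y")
  case True
  then obtain s where s: "s \<in> C" "is_supremum s Y" using c1 Y by blast
  have "sol {eq1 T s} = sol (eq1 T ` Y)"
  proof -
    have "inf x s = bot \<longleftrightarrow> (\<forall>a\<in>Y. inf x a = bot)" for x
    proof
      assume "inf x s = bot"
      then show "\<forall>a\<in>Y. inf x a = bot" using s
        by (metis (no_types, lifting) bot_unique inf_mono is_supremum_def order_refl)
    next
      assume "\<forall>a\<in>Y. inf x a = bot" then show "inf x s = bot" using L_sup s by blast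
    qed
    then show ?thesis by (auto simp: sol_eq1 sol_def eq1_def)
  qed
  then show ?thesis using eqn_over_eqs(1)[OF s(1) T] by (intro exI[of _ "{eq1 T s}"]) auto
next
  case False
  then obtain c where c: "c \<in> C" and ceq: "sol ((\<lambda>cj. (Meet (Var 0) (Cst cj), Zero)) ` Y)
                 = sol {leq_eqn (Var 0) (Cst c)}" using c2 Y by blast
  have key: "(\<forall>a\<in>Y. inf x a = bot) \<longleftrightarrow> sup x c = c" for x
  proof -
    have "(\<lambda>_. x) \<in> sol ((\<lambda>cj. (Meet (Var 0) (Cst cj), Zero)) ` Y) \<longleftrightarrow> (\<forall>a\<in>Y. inf x a = bot)"
      by (auto simp: sol_def)
    moreover have "(\<lambda>_. x) \<in> sol {leq_eqn (Var 0) (Cst c)} \<longleftrightarrow> sup x c = c"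
      by (auto simp: sol_def leq_eqn_def)
    ultimately show ?thesis using ceq by simp
  qed
  have "sol {(Join T (Cst c), Cst c)} = {v. sup (eval v T) c = c}" by (auto simp: sol_def)
  also have "\<dots> = {v. \<forall>a\<in>Y. inf (eval v T) a = bot}" using key by blast
  also have "\<dots> = sol (eq1 T ` Y)" by (rule sol_eq1[symmetric])
  finally have "sol {(Join T (Cst c), Cst c)} = sol (eq1 T ` Y)" .
  moreover have "eqn_over C n (Join T (Cst c), Cst c)" using T c by (auto simp: eqn_over_def)
  ultimately show ?thesis by (intro exI[of _ "{(Join T (Cst c), Cst c)}"]) auto
qed

lemma G2:
  assumes T: "csts T \<subseteq> C" "vars T \<subseteq> {..<n}" and Y: "Y \<subseteq> C"
  shows "\<exists>F. finite F \<and> (\<forall>e\<in>F. eqn_over C n e) \<and> sol F = sol (eq2 T ` Y)"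
proof (cases "Y = {}")
  case True then show ?thesis by (intro exI[of _ "{}"]) auto
next
  case False
  then obtain a0 where a0: "a0 \<in> Y" by blast
  have Y': "(\<lambda>a. a0 - a) ` Y \<subseteq> C" using Y a0 SA by (auto simp: ershov_subalgebra_def)
  have "bounded_above ((\<lambda>a. a0 - a) ` Y)" unfolding bounded_above_def using t2 by blast
  then obtain s where s: "s \<in> C" "is_supremum s ((\<lambda>a. a0 - a) ` Y)" using c1 Y' by blast
  have sC: "a0 - s \<in> C" using s Y a0 SA by (auto simp: ershov_subalgebra_def)
  have key: "(\<forall>a\<in>Y. x \<le> a) \<longleftrightarrow> x \<le> a0 - s" for x
  proof
    assume h: "\<forall>a\<in>Y. x \<le> a"
    then have xa0: "x \<le> a0" using a0 by blast
    have "\<forall>b\<in>(\<lambda>a. a0 - a) ` Y. inf x b = bot"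
    proof
      fix b assume "b \<in> (\<lambda>a. a0 - a) ` Y"
      then obtain a where a: "a \<in> Y" "b = a0 - a" by blast
      have xa: "x \<le> a" using h a by blast
      have "inf x b \<le> inf a (a0 - a)" using xa a(2) by (meson inf_mono order_refl)
      then show "inf x b = bot" using t12[of a a0] by (simp add: bot_unique)
    qed
    then have "inf x s = bot" using L_sup s by blast
    then show "x \<le> a0 - s" using t11 xa0 by blast
  next
    assume h: "x \<le> a0 - s"
    show "\<forall>a\<in>Y. x \<le> a"
    proof
      fix a assume a: "a \<in> Y"
      have xa0: "x \<le> a0" using h t2 order_trans by blast
      have "inf x s \<le> inf (a0 - s) s" using h by (meson inf_mono order_refl)
      then have xs: "inf x s = bot" using d1[of a0 s] by (simp add: bot_unique)
      have "a0 - a \<le> s" using s a by (auto simp: is_supremum_def)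
      then have "inf x (a0 - a) \<le> inf x s" by (meson inf_mono order_refl)
      then have xb: "inf x (a0 - a) = bot" using xs by (simp add: bot_unique)
      have "x - a \<le> a0 - a" using xa0 by (rule t8)
      moreover have "x - a \<le> x" by (rule t2)
      ultimately have "x - a \<le> inf x (a0 - a)" by simp
      then have "x - a = bot" using xb by (simp add: bot_unique)
      then show "x \<le> a" using t1 by blast
    qed
  qed
  have "sol {eq2 T (a0 - s)} = sol (eq2 T ` Y)"
    using key by (auto simp: sol_eq2 sol_def eq2_def t1)
  then show ?thesis using eqn_over_eqs(2)[OF sC T] by (intro exI[of _ "{eq2 T (a0 - s)}"]) auto
qed

lemma G3:
  assumes T: "csts T \<subseteq> C" "vars T \<subseteq> {..<n}" and Y: "Y \<subseteq> C"
  shows "\<exists>F. finite F \<and> (\<forall>e\<in>F. eqn_over C n e) \<and> sol F = sol (eq3 T ` Y)"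
proof (cases "bounded_above Y")
  case True
  then obtain s where s: "s \<in> C" "is_supremum s Y" using c1 Y by blast
  have "(\<forall>a\<in>Y. a \<le> x) \<longleftrightarrow> s \<le> x" for x
    using s unfolding is_supremum_def by (meson order_trans)
  then have "sol {eq3 T s} = sol (eq3 T ` Y)"
    by (auto simp: sol_eq3 sol_def eq3_def t1)
  then show ?thesis using eqn_over_eqs(3)[OF s(1) T] by (intro exI[of _ "{eq3 T s}"]) auto
next
  case False
  then obtain a where a: "a \<in> Y" "a \<noteq> bot"
    unfolding bounded_above_def by (metis bot_unique order_refl)
  have "sol (eq3 T ` Y) = {}"
  proof -
    have "\<not> (\<forall>b\<in>Y. b \<le> x)" for x using False unfolding bounded_above_def by blast
    then show ?thesis by (auto simp: sol_eq3)
  qed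
  moreover have "sol {(Cst a, Zero)} = {}" using a by (auto simp: sol_def)
  moreover have "eqn_over C n (Cst a, Zero)" using a Y by (auto simp: eqn_over_def)
  ultimately show ?thesis by (intro exI[of _ "{(Cst a, Zero)}"]) auto
qed

end

lemma sym_diff_zero: "sup ((x::'a) - y) (y - x) = bot \<longleftrightarrow> x = y"
  by (metis antisym sup_eq_bot_iff2 t1 order_refl)

lemma decomp:
  assumes V: "vars (fst e) \<union> vars (snd e) \<subseteq> {..<n}"
  shows "sol {e} = sol (EE n (e::'a eqn))"
proof -
  have Vu: "vars (uT e) \<subseteq> {..<n}" using V by (auto simp: uT_def)
  have "v \<in> sol {e} \<longleftrightarrow> v \<in> sol (EE n e)" for v
  proof -
    let ?x = "eval v (uT e)"
    have A: "v \<in> sol {e} \<longleftrightarrow> ?x = bot" by (simp add: sol_def uT_def sym_diff_zero)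
    have B: "?x = bot \<longleftrightarrow> (\<forall>S. S \<subseteq> {..<n} \<longrightarrow> piece v ?x n S = bot)"
    proof
      assume "?x = bot" then show "\<forall>S. S \<subseteq> {..<n} \<longrightarrow> piece v ?x n S = bot" by (simp add: p_bot)
    next
      assume "\<forall>S. S \<subseteq> {..<n} \<longrightarrow> piece v ?x n S = bot"
      then show "?x = bot" using p_sep[of n v ?x] by blast
    qed
    have C: "(\<forall>S. S \<subseteq> {..<n} \<longrightarrow> piece v ?x n S = bot) \<longleftrightarrow>
       piece v ?x n {} = bot \<and> (\<forall>S\<in>NE n. piece v ?x n S = bot)"
      by (auto simp: NE_def)
    have D: "piece v ?x n {} = bot \<longleftrightarrow> v \<in> sol {eq3 (JT n) (eval (\<lambda>_. bot) (uT e))}"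
      using p_eval0[OF Vu, of v] by (simp add: p_empty sol_def eq3_def)
    have E1: "piece v ?x n S = bot \<longleftrightarrow> v \<in> sol {regE n e S}" if S: "S \<in> NE n" for S
    proof -
      let ?R = "piece v (v (Min S)) n S"
      have "piece v ?x n S = inf ?R (eval (wS S ?R) (uT e))"
        using p_eval[of S n "uT e" v] S Vu by (auto simp: NE_def)
      also have "\<dots> = polval (fst (pol S (uT e))) (snd (pol S (uT e))) ?R" by (rule pol_ok)
      finally have X: "piece v ?x n S = polval (fst (pol S (uT e))) (snd (pol S (uT e))) ?R" .
      have R: "eval v (RT n S) = ?R" by (simp add: RT_def eval_pieceT)
      show ?thesis unfolding X
        by (cases "fst (pol S (uT e))") (simp_all add: sol_def regE_def eq1_def eq2_def polval_def R)
    qed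
    have E2: "v \<in> sol (regE n e ` NE n) \<longleftrightarrow> (\<forall>S\<in>NE n. v \<in> sol {regE n e S})"
      by (auto simp: sol_def)
    have F: "v \<in> sol (EE n e) \<longleftrightarrow> v \<in> sol {eq3 (JT n) (eval (\<lambda>_. bot) (uT e))} \<and> v \<in> sol (regE n e ` NE n)"
      unfolding EE_def sol_def by blast
    have G: "(\<forall>S\<in>NE n. piece v ?x n S = bot) \<longleftrightarrow> v \<in> sol (regE n e ` NE n)"
      using E1 by (simp add: E2)
    show ?thesis by (simp only: A B C D G F)
  qed
  then show ?thesis by blast
qed


lemma bwd:
  fixes C :: "'a set"
  assumes SA: "ershov_subalgebra C"
    and c1: "\<forall>X. X \<subseteq> C \<and> bounded_above X \<longrightarrow> (\<exists>s\<in>C. is_supremum s X)"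
    and c2: "\<forall>X. X \<subseteq> C \<and> \<not> bounded_above X \<longrightarrow>
         (\<exists>c\<in>C. sol ((\<lambda>cj. (Meet (Var 0) (Cst cj), Zero)) ` X)
                 = sol {leq_eqn (Var 0) (Cst c)})"
  shows "weakly_eq_noetherian C"
  unfolding weakly_eq_noetherian_def
proof (intro allI impI)
  fix n and Sys :: "'a eqn set"
  assume Sys: "\<forall>e\<in>Sys. eqn_over C n e"
  define U where "U = (\<Union>e\<in>Sys. EE n e)"
  have solU: "sol Sys = sol U"
  proof -
    have "sol Sys = (\<Inter>e\<in>Sys. sol {e})" by (rule sol_union_single)
    also have "\<dots> = (\<Inter>e\<in>Sys. sol (EE n e))"
    proof (rule INF_cong[OF refl])
      fix e assume "e \<in> Sys"
      then have "vars (fst e) \<union> vars (snd e) \<subseteq> {..<n}" using Sys by (auto simp: eqn_over_def)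
      then show "sol {e} = sol (EE n e)" by (rule decomp)
    qed
    also have "\<dots> = sol U" unfolding U_def by (rule sol_UN[symmetric])
    finally show ?thesis .
  qed
  define Y3 where "Y3 = {a\<in>C. eq3 (JT n) a \<in> U}"
  define Y1 where "Y1 S = {a\<in>C. eq1 (RT n S) a \<in> U}" for S
  define Y2 where "Y2 S = {a\<in>C. eq2 (RT n S) a \<in> U}" for S
  have Ueq: "U = eq3 (JT n) ` Y3 \<union> (\<Union>S\<in>NE n. eq1 (RT n S) ` Y1 S \<union> eq2 (RT n S) ` Y2 S)"
  proof
    show "U \<subseteq> eq3 (JT n) ` Y3 \<union> (\<Union>S\<in>NE n. eq1 (RT n S) ` Y1 S \<union> eq2 (RT n S) ` Y2 S)"
    proof
      fix u assume uU: "u \<in> U"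
      then obtain e where e: "e \<in> Sys" "u \<in> EE n e" unfolding U_def by blast
      have cu: "csts (uT e) \<subseteq> C" using Sys e(1) by (auto simp: eqn_over_def uT_def)
      from e(2) consider (a) "u = eq3 (JT n) (eval (\<lambda>_. bot) (uT e))"
        | (b) S where "S \<in> NE n" "u = regE n e S" unfolding EE_def by blast
      then show "u \<in> eq3 (JT n) ` Y3 \<union> (\<Union>S\<in>NE n. eq1 (RT n S) ` Y1 S \<union> eq2 (RT n S) ` Y2 S)"
      proof cases
        case a
        have "eval (\<lambda>_. bot) (uT e) \<in> C"
          using eval_C[OF SA cu] SA by (auto simp: ershov_subalgebra_def)
        then show ?thesis using a uU unfolding Y3_def by blast
      next
        case (b S)
        have "snd (pol S (uT e)) \<in> C" using pol_C[OF SA cu] .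
        then show ?thesis using b uU unfolding Y1_def Y2_def regE_def
          by (cases "fst (pol S (uT e))") auto
      qed
    qed
    show "eq3 (JT n) ` Y3 \<union> (\<Union>S\<in>NE n. eq1 (RT n S) ` Y1 S \<union> eq2 (RT n S) ` Y2 S) \<subseteq> U"
      unfolding Y1_def Y2_def Y3_def by blast
  qed
  have RTv: "csts (RT n S) \<subseteq> C \<and> vars (RT n S) \<subseteq> {..<n}" if S: "S \<in> NE n" for S
  proof -
    have fin: "finite S" using S finite_subset[of S "{..<n}"] by (auto simp: NE_def)
    have "Min S \<in> S" using Min_in[OF fin] S by (auto simp: NE_def)
    then have "Min S < n" using S by (auto simp: NE_def)
    then show ?thesis using vars_pieceT[of "Var (Min S)" n S] csts_pieceT[of "Var (Min S)" n S]
      by (auto simp: RT_def)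
  qed
  have JTv: "csts (JT n) \<subseteq> (C::'a set)" "vars (JT n) \<subseteq> {..<n}" by (simp_all add: csts_JT vars_JT)
  obtain F3 where F3: "finite F3" "\<forall>e\<in>F3. eqn_over C n e" "sol F3 = sol (eq3 (JT n) ` Y3)"
    using G3[OF SA c1 c2 JTv, of Y3] by (auto simp: Y3_def)
  have "\<forall>S\<in>NE n. \<exists>F. finite F \<and> (\<forall>e\<in>F. eqn_over C n e) \<and> sol F = sol (eq1 (RT n S) ` Y1 S)"
  proof
    fix S assume S: "S \<in> NE n"
    show "\<exists>F. finite F \<and> (\<forall>e\<in>F. eqn_over C n e) \<and> sol F = sol (eq1 (RT n S) ` Y1 S)"
      by (rule G1[OF SA c1 c2 conjunct1[OF RTv[OF S]] conjunct2[OF RTv[OF S]]]) (auto simp: Y1_def)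
  qed
  from bchoice[OF this] obtain F1 where
    F1: "\<forall>S\<in>NE n. finite (F1 S) \<and> (\<forall>e\<in>F1 S. eqn_over C n e) \<and> sol (F1 S) = sol (eq1 (RT n S) ` Y1 S)"
    by blast
  have "\<forall>S\<in>NE n. \<exists>F. finite F \<and> (\<forall>e\<in>F. eqn_over C n e) \<and> sol F = sol (eq2 (RT n S) ` Y2 S)"
  proof
    fix S assume S: "S \<in> NE n"
    show "\<exists>F. finite F \<and> (\<forall>e\<in>F. eqn_over C n e) \<and> sol F = sol (eq2 (RT n S) ` Y2 S)"
      by (rule G2[OF SA c1 c2 conjunct1[OF RTv[OF S]] conjunct2[OF RTv[OF S]]]) (auto simp: Y2_def)
  qed
  from bchoice[OF this] obtain F2 where
    F2: "\<forall>S\<in>NE n. finite (F2 S) \<and> (\<forall>e\<in>F2 S. eqn_over C n e) \<and> sol (F2 S) = sol (eq2 (RT n S) ` Y2 S)"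
    by blast
  define F where "F = F3 \<union> (\<Union>S\<in>NE n. F1 S \<union> F2 S)"
  have "finite F" unfolding F_def using F3(1) F1 F2 finite_NE[of n] by auto
  moreover have "\<forall>e\<in>F. eqn_over C n e" unfolding F_def using F3(2) F1 F2 by blast
  moreover have "sol F = sol Sys"
  proof -
    have "sol F = sol F3 \<inter> (\<Inter>S\<in>NE n. sol (F1 S) \<inter> sol (F2 S))"
      unfolding F_def by (simp add: sol_Un sol_UN)
    also have "\<dots> = sol (eq3 (JT n) ` Y3) \<inter>
        (\<Inter>S\<in>NE n. sol (eq1 (RT n S) ` Y1 S) \<inter> sol (eq2 (RT n S) ` Y2 S))"
      using F3(3) F1 F2 by (auto intro!: INF_cong)
    also have "\<dots> = sol U" by (subst Ueq) (simp add: sol_Un sol_UN)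
    finally show ?thesis using solU by simp
  qed
  ultimately show "\<exists>F. finite F \<and> (\<forall>e\<in>F. eqn_over C n e) \<and> sol F = sol Sys" by blast
qed

lemma NE1: "NE 1 = {{0}}"
proof -
  have "{..<1::nat} = {0}" by auto
  then show ?thesis unfolding NE_def by auto
qed

lemma shape_single:
  assumes SA: "ershov_subalgebra C" and e: "eqn_over C 1 (e::'a eqn)"
  shows "shape C (sol {e})"
proof -
  have V: "vars (fst e) \<union> vars (snd e) \<subseteq> {..<1}" using e by (auto simp: eqn_over_def)
  have cu: "csts (uT e) \<subseteq> C" using e by (auto simp: eqn_over_def uT_def)
  define c0 where "c0 = eval (\<lambda>_. bot) (uT e)"
  have c0C: "c0 \<in> C" unfolding c0_def using eval_C[OF SA cu] SA by (auto simp: ershov_subalgebra_def)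
  define a where "a = snd (pol {0} (uT e))"
  have aC: "a \<in> C" unfolding a_def using pol_C[OF SA cu] .
  have bC: "bot \<in> C" using SA by (simp add: ershov_subalgebra_def)
  have NE1': "NE (Suc 0) = {{0}}" using NE1 by simp
  have EE1: "EE 1 e = {eq3 (JT 1) c0, regE 1 e {0}}" by (simp add: EE_def NE1' c0_def)
  have J1: "eval v (JT (Suc 0)) = v 0" for v :: "nat \<Rightarrow> 'a" by simp
  have R1: "eval v (RT (Suc 0) {0}) = v 0" for v :: "nat \<Rightarrow> 'a" by (simp add: RT_def)
  have S: "sol {e} = {v. c0 \<le> v 0 \<and> (if fst (pol {0} (uT e)) then inf (v 0) a = bot else v 0 \<le> a)}"
    unfolding decomp[OF V] EE1 by (auto simp: sol_def eq3_def regE_def eq1_def eq2_def J1 R1 t1 a_def)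
  show ?thesis
  proof (cases "fst (pol {0} (uT e))")
    case True
    then show ?thesis unfolding S shape_def using c0C aC bC
      by (intro bexI[of _ c0] bexI[of _ a] bexI[of _ bot] exI[of _ False]) auto
  next
    case False
    then show ?thesis unfolding S shape_def using c0C aC bC
      by (intro bexI[of _ c0] bexI[of _ bot] bexI[of _ a] exI[of _ True]) auto
  qed
qed

lemma shape_fin:
  assumes SA: "ershov_subalgebra C"
  shows "finite F \<Longrightarrow> (\<forall>e\<in>F. eqn_over C 1 e) \<Longrightarrow> shape C (sol (F::'a eqn set))"
proof (induction F rule: finite_induct)
  case empty
  have "sol ({}::'a eqn set) = UNIV" by (simp add: sol_def)
  then show ?case using shape_UNIV[OF SA] by simp
next
  case (insert e F)
  have "sol (insert e F) = sol {e} \<inter> sol F" by (rule sol_insert)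
  then show ?case using shape_int[OF SA shape_single[OF SA] insert.IH] insert.prems by simp
qed

lemma fwd:
  fixes C :: "'a set"
  assumes SA: "ershov_subalgebra C" and W: "weakly_eq_noetherian C"
  shows "(\<forall>X. X \<subseteq> C \<and> bounded_above X \<longrightarrow> (\<exists>s\<in>C. is_supremum s X)) \<and>
      (\<forall>X. X \<subseteq> C \<and> \<not> bounded_above X \<longrightarrow>
         (\<exists>c\<in>C. sol ((\<lambda>cj. (Meet (Var 0) (Cst cj), Zero)) ` X)
                 = sol {leq_eqn (Var 0) (Cst c)}))"
proof -
  have W': "\<And>S. (\<forall>e\<in>S. eqn_over C 1 e) \<Longrightarrow> \<exists>F. finite F \<and> (\<forall>e\<in>F. eqn_over C 1 e) \<and> sol F = sol S"
    using W unfolding weakly_eq_noetherian_def by simp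
  show ?thesis
proof (intro conjI allI impI)
  fix X assume XC: "X \<subseteq> C \<and> bounded_above X"
  then obtain u where u: "\<forall>x\<in>X. x \<le> u" unfolding bounded_above_def by blast
  let ?Sig = "(\<lambda>c. (Join (Cst c) (Var 0), Var 0)) ` X"
  have "\<forall>e\<in>?Sig. eqn_over C 1 e" using XC by (auto simp: eqn_over_def)
  from W'[OF this] obtain F where F: "finite F" "\<forall>e\<in>F. eqn_over C 1 e" "sol F = sol ?Sig"
    by (elim exE conjE) simp
  have "shape C (sol F)" using shape_fin[OF SA F(1) F(2)] .
  then obtain d p q b where d: "d \<in> C" and Seq: "sol ?Sig = {v. d \<le> v 0 \<and> inf (v 0) p = bot \<and> (b \<longrightarrow> v 0 \<le> q)}"
    unfolding shape_def F(3) by blast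
  have mem: "(\<forall>c\<in>X. c \<le> x) \<longleftrightarrow> d \<le> x \<and> inf x p = bot \<and> (b \<longrightarrow> x \<le> q)" for x
  proof -
    have "(\<lambda>_. x) \<in> sol ?Sig \<longleftrightarrow> (\<forall>c\<in>X. c \<le> x)" by (auto simp: sol_def le_iff_sup)
    then show ?thesis using Seq by auto
  qed
  have du: "d \<le> u" "inf u p = bot" "b \<longrightarrow> u \<le> q" using mem[of u] u by auto
  have "inf d p \<le> inf u p" using du(1) by (meson inf_mono order_refl)
  then have "inf d p = bot" using du(2) by (simp add: bot_unique)
  then have "\<forall>c\<in>X. c \<le> d" using mem[of d] du by auto
  moreover have "\<forall>y. (\<forall>c\<in>X. c \<le> y) \<longrightarrow> d \<le> y" using mem by blast
  ultimately show "\<exists>s\<in>C. is_supremum s X" using d unfolding is_supremum_def by blast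
next
  fix X assume XC: "X \<subseteq> C \<and> \<not> bounded_above X"
  let ?Sig = "(\<lambda>cj. (Meet (Var 0) (Cst cj), Zero)) ` X"
  have "\<forall>e\<in>?Sig. eqn_over C 1 e" using XC by (auto simp: eqn_over_def)
  from W'[OF this] obtain F where F: "finite F" "\<forall>e\<in>F. eqn_over C 1 e" "sol F = sol ?Sig"
    by (elim exE conjE) simp
  have "shape C (sol F)" using shape_fin[OF SA F(1) F(2)] .
  then obtain d p q b where pC: "p \<in> C" and qC: "q \<in> C"
    and Seq: "sol ?Sig = {v. d \<le> v 0 \<and> inf (v 0) p = bot \<and> (b \<longrightarrow> v 0 \<le> q)}"
    unfolding shape_def F(3) by blast
  have SigS: "sol ?Sig = {v. \<forall>c\<in>X. inf (v 0) c = bot}" by (auto simp: sol_def)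
  have mem: "(\<forall>c\<in>X. inf x c = bot) \<longleftrightarrow> d \<le> x \<and> inf x p = bot \<and> (b \<longrightarrow> x \<le> q)" for x
  proof -
    have "(\<lambda>_. x) \<in> sol ?Sig \<longleftrightarrow> (\<forall>c\<in>X. inf x c = bot)" by (simp add: SigS)
    then show ?thesis using Seq by auto
  qed
  have "d \<le> bot" using mem[of bot] by simp
  then have d0: "d = bot" by (simp add: bot_unique)
  show "\<exists>c\<in>C. sol ?Sig = sol {leq_eqn (Var 0) (Cst c)}"
  proof (cases b)
    case False
    have "\<forall>c\<in>X. c \<le> p"
    proof
      fix c assume c: "c \<in> X"
      have "inf (c - p) p = bot" by (rule d1)
      then have "\<forall>c'\<in>X. inf (c - p) c' = bot" using mem[of "c - p"] False d0 by simp
      then have "inf (c - p) c = bot" using c by blast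
      moreover have "inf (c - p) c = c - p" using t2 by (simp add: inf_absorb1)
      ultimately show "c \<le> p" using t1 by simp
    qed
    then have False using XC unfolding bounded_above_def by blast
    then show ?thesis ..
  next
    case True
    have cC: "q - p \<in> C" using pC qC SA by (auto simp: ershov_subalgebra_def)
    have "(\<forall>c\<in>X. inf x c = bot) \<longleftrightarrow> x \<le> q - p" for x
    proof -
      have "d \<le> x \<and> inf x p = bot \<and> x \<le> q \<longleftrightarrow> x \<le> q - p"
      proof
        assume "d \<le> x \<and> inf x p = bot \<and> x \<le> q" then show "x \<le> q - p" using t11 by blast
      next
        assume h: "x \<le> q - p"
        have "x \<le> q" using h t2 order_trans by blast
        moreover have "inf x p \<le> inf (q - p) p" using h by (meson inf_mono order_refl)
        then have "inf x p = bot" using d1[of q p] by (simp add: bot_unique)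
        ultimately show "d \<le> x \<and> inf x p = bot \<and> x \<le> q" using d0 by simp
      qed
      then show ?thesis using mem True by simp
    qed
    then have "sol ?Sig = sol {leq_eqn (Var 0) (Cst (q - p))}"
      unfolding SigS by (auto simp: sol_def leq_eqn_def le_iff_sup)
    then show ?thesis using cC by blast
  qed
qed
qed

end

theorem mainTheorem8:
  fixes C :: "'a::{distrib_lattice,order_bot,minus} set"
  assumes "ershov_algebra TYPE('a)"
    and "ershov_subalgebra C"
  shows "weakly_eq_noetherian C \<longleftrightarrow>
     ((\<forall>X. X \<subseteq> C \<and> bounded_above X \<longrightarrow> (\<exists>s\<in>C. is_supremum s X)) \<and>
      (\<forall>X. X \<subseteq> C \<and> \<not> bounded_above X \<longrightarrow>
         (\<exists>c\<in>C. sol ((\<lambda>cj. (Meet (Var 0) (Cst cj), Zero)) ` X)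
                 = sol {leq_eqn (Var 0) (Cst c)})))"
  using fwd[OF assms(1) assms(2)] bwd[OF assms(1) assms(2)] by blast

end
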